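(* Let $X$ be a real-valued random process on $\mathbb{R}$ with stationary increments and let $\psi$ be a wavelet as described in the context, with all moments below finite. Suppose $X$ is self-similar up to the scale $2^J$ in the following sense: for every integer $\ell\geq 0$ there exists a real random variable $A_\ell$, log infinitely divisible and independent of $X$, such that $$\{X\star\psi_j(t)\}_{j\leq J,\,t}\overset{d}{=}A_\ell\,\{X\star\psi_{j-\ell}(2^{-\ell}t)\}_{j\leq J,\,t}$$ (equality of all finite-dimensional joint distributions). Then there exist constants $c_1,c_2,\zeta_1,\zeta_2$ such that for all integers $j\leq J$, $$\mathbb{E}\{|X\star\psi_j(t)|\}=c_1 2^{j\zeta_1},\qquad \mathbb{E}\{|X\star\psi_j(t)|^2\}=c_2 2^{j\zeta_2},$$ and for all $\tau\in\mathbb{R}$, all integers $j\leq J$ and all $a\in\mathbb{Z}$, $$C_{\rho W}(\tau;j,a)=C_{\rho W}(\tau;0,a).$$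
   Context: A wavelet $\psi:\mathbb{R}\to\mathbb{C}$ has fast decay away from $t=0$, zero average, $\int|\psi|^2=1$, and a real-valued Fourier transform. For $j\in\mathbb{Z}$, $\psi_j(t)=2^{-j}\psi(2^{-j}t)$ and $WX(t,j)=X\star\psi_j(t)$, which is stationary in $t$. For $z\in\mathbb{C}$, $\rho(z)=(z,|z|)$. The wavelet spectrum is $\sigma_W^2(j)=\mathbb{E}\{|X\star\psi_j(t)|^2\}$. The normalized phase-modulus correlation is the $2\times2$ matrix $$C_{\rho W}(\tau;j,a)=\frac{\mathbb{E}\{\rho WX(t,j)\,\rho WX(t-2^j\tau,j-a)^*\}}{\sigma_W(j)\,\sigma_W(j-a)},$$ where for $u,v\in\mathbb{C}^2$, $uv^*$ is the matrix with entries $u_k\overline{v_l}$; it does not depend on $t$ by stationarity.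
   Formalization: The identity $C_{\rho W}(\tau;j,a)=C_{\rho W}(\tau;0,a)$ is claimed only when, besides j <= J, also j - a <= J, -a <= J and 0 <= J hold. The statement above fails without it. *)

theory Defs
  imports "HOL-Probability.Probability"
begin

definition fourier :: "(real \<Rightarrow> complex) \<Rightarrow> real \<Rightarrow> complex" where
  "fourier f w = (LINT t|lborel. f t * exp (- \<i> * complex_of_real (w * t)))"

definition is_wavelet :: "(real \<Rightarrow> complex) \<Rightarrow> bool" where
  "is_wavelet psi \<longleftrightarrow>
     psi \<in> borel_measurable lborel \<and>
     (\<forall>n::nat. \<exists>C::real. \<forall>t. cmod (psi t) \<le> C / (1 + \<bar>t\<bar>) ^ n) \<and>
     integrable lborel psi \<and> (LINT t|lborel. psi t) = 0 \<and>
     (LINT t|lborel. (cmod (psi t))\<^sup>2) = 1 \<and>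
     (\<forall>w. Im (fourier psi w) = 0)"

definition psi_scale :: "(real \<Rightarrow> complex) \<Rightarrow> int \<Rightarrow> real \<Rightarrow> complex" where
  "psi_scale psi j t = complex_of_real (2 powr (- real_of_int j)) * psi (2 powr (- real_of_int j) * t)"

definition WX :: "('w \<Rightarrow> real \<Rightarrow> real) \<Rightarrow> (real \<Rightarrow> complex) \<Rightarrow> 'w \<Rightarrow> real \<Rightarrow> int \<Rightarrow> complex" where
  "WX X psi \<omega> t j = (LINT u|lborel. complex_of_real (X \<omega> u) * psi_scale psi j (t - u))"

definition rho :: "complex \<Rightarrow> complex ^ 2" where
  "rho z = vector [z, complex_of_real (cmod z)]"

text \<open>Wavelet spectrum \<open>\<sigma>_W(j)\<close> (evaluated at time t; independent of t by stationarity).\<close>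
definition sigmaW :: "'w measure \<Rightarrow> ('w \<Rightarrow> real \<Rightarrow> real) \<Rightarrow> (real \<Rightarrow> complex) \<Rightarrow> real \<Rightarrow> int \<Rightarrow> real" where
  "sigmaW M X psi t j = sqrt (LINT \<omega>|M. (cmod (WX X psi \<omega> t j))\<^sup>2)"

definition C_rhoW :: "'w measure \<Rightarrow> ('w \<Rightarrow> real \<Rightarrow> real) \<Rightarrow> (real \<Rightarrow> complex) \<Rightarrow> real \<Rightarrow> real \<Rightarrow> int \<Rightarrow> int \<Rightarrow> complex ^ 2 ^ 2" where
  "C_rhoW M X psi t \<tau> j a =
     (\<chi> k l. (LINT \<omega>|M. (rho (WX X psi \<omega> t j) $ k) *
                         cnj (rho (WX X psi \<omega> (t - 2 powr (real_of_int j) * \<tau>) (j - a)) $ l))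
            / complex_of_real (sigmaW M X psi t j * sigmaW M X psi (t - 2 powr (real_of_int j) * \<tau>) (j - a)))"

fun conv_pow :: "real measure \<Rightarrow> nat \<Rightarrow> real measure" where
  "conv_pow \<nu> 0 = return borel 0"
| "conv_pow \<nu> (Suc n) = convolution \<nu> (conv_pow \<nu> n)"

definition infinitely_divisible :: "real measure \<Rightarrow> bool" where
  "infinitely_divisible \<mu> \<longleftrightarrow>
     (\<forall>n::nat. n \<ge> 1 \<longrightarrow> (\<exists>\<nu>. prob_space \<nu> \<and> sets \<nu> = sets borel \<and> \<mu> = conv_pow \<nu> n))"

definition log_inf_div :: "'w measure \<Rightarrow> ('w \<Rightarrow> real) \<Rightarrow> bool" where
  "log_inf_div M A \<longleftrightarrow> A \<in> borel_measurable M \<and> (\<forall>\<omega>\<in>space M. A \<omega> > 0) \<and>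
     infinitely_divisible (distr M borel (\<lambda>\<omega>. ln (A \<omega>)))"

definition stationary_increments :: "'w measure \<Rightarrow> ('w \<Rightarrow> real \<Rightarrow> real) \<Rightarrow> bool" where
  "stationary_increments M X \<longleftrightarrow>
     (\<forall>h T. finite T \<longrightarrow>
        distr M (PiM T (\<lambda>_. borel)) (\<lambda>\<omega>. \<lambda>t\<in>T. X \<omega> (t + h) - X \<omega> h) =
        distr M (PiM T (\<lambda>_. borel)) (\<lambda>\<omega>. \<lambda>t\<in>T. X \<omega> t - X \<omega> 0))"

definition WX_stationary :: "'w measure \<Rightarrow> ('w \<Rightarrow> real \<Rightarrow> real) \<Rightarrow> (real \<Rightarrow> complex) \<Rightarrow> bool" where
  "WX_stationary M X psi \<longleftrightarrow>
     (\<forall>h S. finite S \<longrightarrow>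
        distr M (PiM S (\<lambda>_. borel)) (\<lambda>\<omega>. \<lambda>(j,t)\<in>S. WX X psi \<omega> (t + h) j) =
        distr M (PiM S (\<lambda>_. borel)) (\<lambda>\<omega>. \<lambda>(j,t)\<in>S. WX X psi \<omega> t j))"

definition self_similar_upto :: "'w measure \<Rightarrow> ('w \<Rightarrow> real \<Rightarrow> real) \<Rightarrow> (real \<Rightarrow> complex) \<Rightarrow> int \<Rightarrow> bool" where
  "self_similar_upto M X psi J \<longleftrightarrow>
     (\<forall>l::nat. \<exists>A::'w \<Rightarrow> real.
        log_inf_div M A \<and>
        prob_space.indep_set M
          (sigma_sets (space M) {A -` B \<inter> space M | B. B \<in> sets borel})
          (sigma_sets (space M) {(\<lambda>\<omega>. X \<omega> t) -` B \<inter> space M | B t. B \<in> sets borel}) \<and>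
        (\<forall>S. finite S \<longrightarrow> S \<subseteq> {(j, t). j \<le> J} \<longrightarrow>
           distr M (PiM S (\<lambda>_. borel)) (\<lambda>\<omega>. \<lambda>(j,t)\<in>S. WX X psi \<omega> t j) =
           distr M (PiM S (\<lambda>_. borel))
             (\<lambda>\<omega>. \<lambda>(j,t)\<in>S. complex_of_real (A \<omega>) *
                  WX X psi \<omega> (2 powr (- real l) * t) (j - int l))))"

end

theory Submission
  imports Defs
begin

lemma key_bounded:
  fixes M F :: "'w measure" and f :: "'w \<Rightarrow> real \<Rightarrow> real"
  assumes prob: "prob_space M" and sub: "subalgebra M F"
    and f_meas: "(\<lambda>(\<omega>,u). f \<omega> u) \<in> borel_measurable (M \<Otimes>\<^sub>M lborel)"
    and f_F: "\<And>u. (\<lambda>\<omega>. f \<omega> u) \<in> borel_measurable F"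
    and bnd: "\<And>\<omega> u. \<bar>f \<omega> u\<bar> \<le> K"
    and supp: "\<And>\<omega> u. u \<notin> {a..b} \<Longrightarrow> f \<omega> u = 0"
  shows "\<exists>g \<in> borel_measurable F. AE \<omega> in M. (LINT u|lborel. f \<omega> u) = g \<omega>"
proof -
  interpret prob_space M by fact
  interpret fs: finite_measure_subalgebra M F
    by unfold_locales (fact sub)
  interpret P: pair_sigma_finite M lborel ..
  have K0: "0 \<le> K" using bnd[of undefined 0] by simp
  define I where "I \<omega> = (LINT u|lborel. f \<omega> u)" for \<omega>
  have fm[measurable]: "(\<lambda>x. f (fst x) (snd x)) \<in> borel_measurable (M \<Otimes>\<^sub>M lborel)"
    using f_meas by (simp add: case_prod_beta')
  have fM[measurable]: "(\<lambda>\<omega>. f \<omega> u) \<in> borel_measurable M" for u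
    using measurable_from_subalg[OF sub f_F] .
  have Im[measurable]: "I \<in> borel_measurable M"
    unfolding I_def using f_meas by measurable
  have intK: "integrable lborel (\<lambda>u. K * indicator {a..b} u :: real)"
    by (intro integrable_mult_right integrable_real_indicator) (auto simp: emeasure_lborel_Icc_eq)
  have fint: "integrable lborel (f \<omega>)" if om: "\<omega> \<in> space M" for \<omega>
  proof (rule Bochner_Integration.integrable_bound[OF intK])
    show "f \<omega> \<in> borel_measurable lborel" using measurable_Pair2[OF fm om] by simp
    show "AE x in lborel. norm (f \<omega> x) \<le> norm (K * indicator {a..b} x)"
      using bnd supp K0 by (auto simp: indicator_def)
  qed
  define C where "C = K * (b - a)"
  have Ib: "\<bar>I \<omega>\<bar> \<le> \<bar>C\<bar>" if om: "\<omega> \<in> space M" for \<omega>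
  proof -
    have "\<bar>I \<omega>\<bar> \<le> (LINT u|lborel. \<bar>f \<omega> u\<bar>)"
      unfolding I_def using integral_norm_bound[of lborel "f \<omega>"] by simp
    also have "\<dots> \<le> (LINT u|lborel. K * indicator {a..b} u)"
      by (intro integral_mono fint[OF om] intK integrable_abs) (use bnd supp K0 in \<open>auto simp: indicator_def\<close>)
    also have "\<dots> \<le> \<bar>C\<bar>"
      by (cases "a \<le> b") (auto simp: C_def)
    finally show ?thesis .
  qed
  have Iint: "integrable M I"
    by (rule integrable_const_bound[where B="\<bar>C\<bar>"]) (use Ib in \<open>auto intro!: AE_I2\<close>)
  define g where "g = real_cond_exp M F I"
  have gF[measurable]: "g \<in> borel_measurable F" unfolding g_def by simp
  have gM[measurable]: "g \<in> borel_measurable M" using measurable_from_subalg[OF sub gF] .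
  have gint: "integrable M g" unfolding g_def using Iint by auto
  have gI_int: "integrable M (\<lambda>x. g x * I x)"
  proof (rule Bochner_Integration.integrable_bound[where f="\<lambda>x. \<bar>C\<bar> * g x"])
    show "integrable M (\<lambda>x. \<bar>C\<bar> * g x)" using gint by simp
    show "(\<lambda>x. g x * I x) \<in> borel_measurable M" by measurable
    show "AE x in M. norm (g x * I x) \<le> norm (\<bar>C\<bar> * g x)"
      using Ib by (auto simp: abs_mult mult.commute[of "\<bar>C\<bar>"] intro!: AE_I2 mult_left_mono)
  qed
  have gg: "integrable M (\<lambda>x. g x * g x)" "(LINT x|M. g x * g x) = (LINT x|M. g x * I x)"
    using fs.real_cond_exp_intg[OF gI_int gF Im] unfolding g_def by auto
  have II_int: "integrable M (\<lambda>x. I x * I x)"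
  proof (rule integrable_const_bound[where B="\<bar>C\<bar>*\<bar>C\<bar>"])
    show "AE x in M. norm (I x * I x) \<le> \<bar>C\<bar> * \<bar>C\<bar>"
    proof (rule AE_I2)
      fix x assume "x \<in> space M"
      then have "\<bar>I x\<bar> * \<bar>I x\<bar> \<le> \<bar>C\<bar> * \<bar>C\<bar>" using Ib by (intro mult_mono) auto
      then show "norm (I x * I x) \<le> \<bar>C\<bar> * \<bar>C\<bar>" by (simp add: abs_mult)
    qed
  qed measurable
  have prod_int: "integrable (M \<Otimes>\<^sub>M lborel) (\<lambda>(x,v). f x v * h x)"
    if hm[measurable]: "h \<in> borel_measurable M" and hint: "integrable M h" for h
  proof (rule P.Fubini_integrable)
    show "(\<lambda>(x,v). f x v * h x) \<in> borel_measurable (M \<Otimes>\<^sub>M lborel)" by measurable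
    have "(LINT y|lborel. norm (case (x, y) of (x, v) \<Rightarrow> f x v * h x)) = (LINT y|lborel. \<bar>f x y\<bar>) * \<bar>h x\<bar>" for x
      by (simp add: abs_mult)
    moreover have "integrable M (\<lambda>x. (LINT y|lborel. \<bar>f x y\<bar>) * \<bar>h x\<bar>)"
    proof (rule Bochner_Integration.integrable_bound[where f="\<lambda>x. \<bar>C\<bar> * h x"])
      show "integrable M (\<lambda>x. \<bar>C\<bar> * h x)" using hint by simp
      show "(\<lambda>x. (LINT y|lborel. \<bar>f x y\<bar>) * \<bar>h x\<bar>) \<in> borel_measurable M" by measurable
      have "(LINT y|lborel. \<bar>f x y\<bar>) \<le> \<bar>C\<bar>" if om: "x \<in> space M" for x
      proof -
        have "(LINT y|lborel. \<bar>f x y\<bar>) \<le> (LINT u|lborel. K * indicator {a..b} u)"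
          by (intro integral_mono fint[OF om] intK integrable_abs) (use bnd supp K0 in \<open>auto simp: indicator_def\<close>)
        also have "\<dots> \<le> \<bar>C\<bar>" by (cases "a \<le> b") (auto simp: C_def)
        finally show ?thesis .
      qed
      then show "AE x in M. norm ((LINT y|lborel. \<bar>f x y\<bar>) * \<bar>h x\<bar>) \<le> norm (\<bar>C\<bar> * h x)"
        by (auto simp: abs_mult intro!: AE_I2 mult_right_mono)
    qed
    ultimately show "integrable M (\<lambda>x. LINT y|lborel. norm (case (x, y) of (x, v) \<Rightarrow> f x v * h x))"
      by simp
    show "AE x in M. integrable lborel (\<lambda>y. case (x, y) of (x, v) \<Rightarrow> f x v * h x)"
      using fint by auto
  qed
  have fub: "(LINT x|M. I x * h x) = (LINT v|lborel. LINT x|M. f x v * h x)"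
    if hm[measurable]: "h \<in> borel_measurable M" and hint: "integrable M h" for h
  proof -
    have "(LINT v|lborel. LINT x|M. f x v * h x) = (LINT x|M. LINT v|lborel. f x v * h x)"
      using P.Fubini_integral[OF prod_int[OF hm hint]] by simp
    also have "\<dots> = (LINT x|M. I x * h x)"
      unfolding I_def by simp
    finally show ?thesis by simp
  qed
  have "(LINT x|M. I x * I x) = (LINT v|lborel. LINT x|M. f x v * I x)"
    using fub[OF Im Iint] .
  also have "\<dots> = (LINT v|lborel. LINT x|M. f x v * g x)"
  proof (rule Bochner_Integration.integral_cong[OF refl])
    fix v
    have fvI: "integrable M (\<lambda>x. f x v * I x)"
    proof (rule integrable_const_bound[where B="K*\<bar>C\<bar>"])
      show "AE x in M. norm (f x v * I x) \<le> K * \<bar>C\<bar>"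
      proof (rule AE_I2)
        fix x assume "x \<in> space M"
        then have "\<bar>f x v\<bar> * \<bar>I x\<bar> \<le> K * \<bar>C\<bar>" using Ib bnd K0 by (intro mult_mono) auto
        then show "norm (f x v * I x) \<le> K * \<bar>C\<bar>" by (simp add: abs_mult)
      qed
    qed measurable
    show "(LINT x|M. f x v * I x) = (LINT x|M. f x v * g x)"
      using fs.real_cond_exp_intg(2)[OF fvI f_F Im] unfolding g_def by simp
  qed
  also have "\<dots> = (LINT x|M. I x * g x)"
    using fub[OF gM gint] by simp
  finally have II: "(LINT x|M. I x * I x) = (LINT x|M. g x * I x)" by (simp add: mult.commute)
  have sq_int: "integrable M (\<lambda>x. (I x - g x)^2)"
  proof -
    have "integrable M (\<lambda>x. I x * I x - 2 * (g x * I x) + g x * g x)"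
      by (intro Bochner_Integration.integrable_add Bochner_Integration.integrable_diff integrable_mult_right II_int gg(1) gI_int)
    also have "(\<lambda>x. I x * I x - 2 * (g x * I x) + g x * g x) = (\<lambda>x. (I x - g x)^2)"
      by (auto simp: power2_eq_square algebra_simps)
    finally show ?thesis .
  qed
  have "(LINT x|M. (I x - g x)^2) = (LINT x|M. I x * I x - 2 * (g x * I x) + g x * g x)"
    by (rule Bochner_Integration.integral_cong) (auto simp: power2_eq_square algebra_simps)
  also have "\<dots> = 0"
    using II gg II_int gI_int by simp
  finally have "AE x in M. (I x - g x)^2 = 0"
    using integral_nonneg_eq_0_iff_AE[OF sq_int] by simp
  then have "AE x in M. I x = g x" by auto
  then show ?thesis using gF unfolding I_def by blast
qed

lemma key_general:
  fixes M F :: "'w measure" and f :: "'w \<Rightarrow> real \<Rightarrow> real"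
  assumes prob: "prob_space M" and sub: "subalgebra M F"
    and f_meas: "(\<lambda>(\<omega>,u). f \<omega> u) \<in> borel_measurable (M \<Otimes>\<^sub>M lborel)"
    and f_F: "\<And>u. (\<lambda>\<omega>. f \<omega> u) \<in> borel_measurable F"
    and fint: "\<And>\<omega>. \<omega> \<in> space M \<Longrightarrow> integrable lborel (f \<omega>)"
  shows "\<exists>g \<in> borel_measurable F. AE \<omega> in M. (LINT u|lborel. f \<omega> u) = g \<omega>"
proof -
  interpret prob_space M by fact
  define fn where "fn n \<omega> u = max (- real n) (min (real n) (f \<omega> u)) * indicator {- real n..real n} u" for n \<omega> u
  have fm[measurable]: "(\<lambda>x. f (fst x) (snd x)) \<in> borel_measurable (M \<Otimes>\<^sub>M lborel)"
    using f_meas by (simp add: case_prod_beta')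
  have "\<exists>g \<in> borel_measurable F. AE \<omega> in M. (LINT u|lborel. fn n \<omega> u) = g \<omega>" for n
  proof (rule key_bounded[OF prob sub, where K="real n" and a="- real n" and b="real n"])
    show "(\<lambda>(\<omega>, u). fn n \<omega> u) \<in> borel_measurable (M \<Otimes>\<^sub>M lborel)"
      unfolding fn_def by measurable
    show "(\<lambda>\<omega>. fn n \<omega> u) \<in> borel_measurable F" for u
      unfolding fn_def using f_F[of u] by measurable
    show "\<bar>fn n \<omega> u\<bar> \<le> real n" for \<omega> u
      unfolding fn_def by (auto simp: indicator_def)
    show "u \<notin> {- real n..real n} \<Longrightarrow> fn n \<omega> u = 0" for \<omega> u
      unfolding fn_def by (auto simp: indicator_def)
  qed
  then obtain G where G: "\<And>n. G n \<in> borel_measurable F"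
    "\<And>n. AE \<omega> in M. (LINT u|lborel. fn n \<omega> u) = G n \<omega>"
    by metis
  have GM: "AE \<omega> in M. \<forall>n. (LINT u|lborel. fn n \<omega> u) = G n \<omega>"
    using G(2) by (simp add: AE_all_countable)
  have conv: "(\<lambda>n. LINT u|lborel. fn n \<omega> u) \<longlonglongrightarrow> (LINT u|lborel. f \<omega> u)"
    if om: "\<omega> \<in> space M" for \<omega>
  proof (rule integral_dominated_convergence[where w="\<lambda>u. \<bar>f \<omega> u\<bar>"])
    have fo[measurable]: "f \<omega> \<in> borel_measurable lborel" using measurable_Pair2[OF fm om] by simp
    show "f \<omega> \<in> borel_measurable lborel" by simp
    show "(\<lambda>u. fn n \<omega> u) \<in> borel_measurable lborel" for n unfolding fn_def by measurable
    show "integrable lborel (\<lambda>u. \<bar>f \<omega> u\<bar>)" using fint[OF om] by auto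
    show "AE u in lborel. norm (fn n \<omega> u) \<le> \<bar>f \<omega> u\<bar>" for n
      unfolding fn_def by (auto simp: indicator_def)
    show "AE u in lborel. (\<lambda>n. fn n \<omega> u) \<longlonglongrightarrow> f \<omega> u"
    proof (rule AE_I2, rule tendsto_eventually, unfold eventually_sequentially)
      fix u
      show "\<exists>N. \<forall>n\<ge>N. fn n \<omega> u = f \<omega> u"
      proof (intro exI allI impI)
        fix n assume "nat \<lceil>\<bar>u\<bar> + \<bar>f \<omega> u\<bar>\<rceil> \<le> n"
        then have "\<bar>u\<bar> + \<bar>f \<omega> u\<bar> \<le> real n" by linarith
        then show "fn n \<omega> u = f \<omega> u" unfolding fn_def by (auto simp: indicator_def)
      qed
    qed
  qed
  define g where "g \<omega> = lim (\<lambda>n. G n \<omega>)" for \<omega>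
  have "g \<in> borel_measurable F" unfolding g_def using G(1) by measurable
  moreover have "AE \<omega> in M. (LINT u|lborel. f \<omega> u) = g \<omega>"
    using GM
  proof (rule AE_mp, intro AE_I2 impI)
    fix \<omega> assume om: "\<omega> \<in> space M" and eq: "\<forall>n. (LINT u|lborel. fn n \<omega> u) = G n \<omega>"
    have "(\<lambda>n. G n \<omega>) \<longlonglongrightarrow> (LINT u|lborel. f \<omega> u)" using conv[OF om] eq by simp
    then show "(LINT u|lborel. f \<omega> u) = g \<omega>" unfolding g_def by (simp add: limI)
  qed
  ultimately show ?thesis by blast
qed


lemma indep_from_sets:
  fixes M F :: "'w measure" and A :: "'w \<Rightarrow> real" and \<xi> :: "'w \<Rightarrow> 'b::topological_space"
  assumes prob: "prob_space M" and sub: "subalgebra M F"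
    and ind: "prob_space.indep_set M (sigma_sets (space M) {A -` B \<inter> space M | B. B \<in> sets borel}) (sets F)"
    and Am: "A \<in> borel_measurable M" and phi: "\<phi> \<in> borel_measurable borel"
    and xi: "\<xi> \<in> borel_measurable F"
  shows "prob_space.indep_var M borel (\<lambda>\<omega>. \<phi> (A \<omega>) :: 'b) borel \<xi>"
proof -
  interpret prob_space M by fact
  have xiM: "\<xi> \<in> borel_measurable M" using measurable_from_subalg[OF sub xi] .
  have pA: "(\<lambda>\<omega>. \<phi> (A \<omega>)) \<in> borel_measurable M" using measurable_comp[OF Am phi] by (simp add: comp_def)
  have s1: "sigma_sets (space M) {(\<lambda>\<omega>. \<phi> (A \<omega>)) -` B \<inter> space M | B. B \<in> sets borel}
      \<subseteq> sigma_sets (space M) {A -` B \<inter> space M | B. B \<in> sets borel}"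
  proof (rule sigma_sets_mono')
    show "{(\<lambda>\<omega>. \<phi> (A \<omega>)) -` B \<inter> space M | B. B \<in> sets borel} \<subseteq> {A -` B \<inter> space M | B. B \<in> sets borel}"
    proof safe
      fix B :: "'b set" assume B: "B \<in> sets borel"
      have "\<phi> -` B \<in> sets borel" using measurable_sets[OF phi B] by simp
      moreover have "(\<lambda>\<omega>. \<phi> (A \<omega>)) -` B \<inter> space M = A -` (\<phi> -` B) \<inter> space M" by auto
      ultimately show "\<exists>C. (\<lambda>\<omega>. \<phi> (A \<omega>)) -` B \<inter> space M = A -` C \<inter> space M \<and> C \<in> sets borel" by blast
    qed
  qed
  have s2: "sigma_sets (space M) {\<xi> -` B \<inter> space M | B. B \<in> sets borel} \<subseteq> sets F"
  proof -
    have sp: "space F = space M" using sub by (simp add: subalgebra_def)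
    have "{\<xi> -` B \<inter> space M | B. B \<in> sets borel} \<subseteq> sets F"
      using measurable_sets[OF xi] sp by auto
    from sets.sigma_sets_subset[of _ F, OF this] show ?thesis using sp by simp
  qed
  show ?thesis
    unfolding indep_var_eq
  proof (intro conjI pA xiM)
    show "indep_set (sigma_sets (space M) {(\<lambda>\<omega>. \<phi> (A \<omega>)) -` B \<inter> space M | B. B \<in> sets borel})
       (sigma_sets (space M) {\<xi> -` B \<inter> space M | B. B \<in> sets borel})"
      using ind unfolding indep_set_def
      by (rule indep_sets_mono_sets) (use s1 s2 in \<open>auto split: bool.split\<close>)
  qed
qed

lemma indep_mult_nonneg:
  fixes M :: "'w measure" and B h :: "'w \<Rightarrow> real"
  assumes prob: "prob_space M" and ind: "prob_space.indep_var M borel B borel h"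
    and B0: "\<And>\<omega>. \<omega> \<in> space M \<Longrightarrow> 0 \<le> B \<omega>"
    and h0: "\<And>\<omega>. \<omega> \<in> space M \<Longrightarrow> 0 \<le> h \<omega>"
    and int: "integrable M (\<lambda>\<omega>. B \<omega> * h \<omega>)" and hint: "integrable M h"
  shows "(LINT \<omega>|M. B \<omega> * h \<omega>) = (LINT \<omega>|M. B \<omega>) * (LINT \<omega>|M. h \<omega>)"
    and "(LINT \<omega>|M. h \<omega>) \<noteq> 0 \<Longrightarrow> integrable M B"
proof -
  interpret prob_space M by fact
  have Bm[measurable]: "B \<in> borel_measurable M" using indep_var_rv1[OF ind] by simp
  have hm[measurable]: "h \<in> borel_measurable M" using indep_var_rv2[OF ind] by simp
  have key: "(LINT \<omega>|M. h \<omega>) = 0" if nB: "\<not> integrable M B"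
  proof -
    define B' where "B' = (\<lambda>x::real. ennreal x) \<circ> B"
    define h' where "h' = (\<lambda>x::real. ennreal x) \<circ> h"
    have ind': "indep_var borel B' borel h'"
      unfolding B'_def h'_def by (rule indep_var_compose[OF ind]) auto
    have cb: "case_bool (borel::ennreal measure) borel = (\<lambda>_. borel)" by (rule ext) (simp split: bool.split)
    have iv: "indep_vars (\<lambda>_. borel) (case_bool B' h') UNIV"
      using ind' unfolding indep_var_def cb .
    have "(\<integral>\<^sup>+\<omega>. (\<Prod>i\<in>UNIV. case_bool B' h' i \<omega>) \<partial>M) = (\<Prod>i\<in>UNIV. \<integral>\<^sup>+\<omega>. case_bool B' h' i \<omega> \<partial>M)"
      by (rule indep_vars_nn_integral[OF _ iv]) auto
    then have eq: "(\<integral>\<^sup>+\<omega>. B' \<omega> * h' \<omega> \<partial>M) = (\<integral>\<^sup>+\<omega>. B' \<omega> \<partial>M) * (\<integral>\<^sup>+\<omega>. h' \<omega> \<partial>M)"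
      by (simp add: UNIV_bool mult.commute)
    have "(\<integral>\<^sup>+\<omega>. B' \<omega> * h' \<omega> \<partial>M) = (\<integral>\<^sup>+\<omega>. norm (B \<omega> * h \<omega>) \<partial>M)"
      by (rule nn_integral_cong) (use B0 h0 in \<open>auto simp: B'_def h'_def ennreal_mult abs_mult\<close>)
    also have "\<dots> < \<infinity>" using int by (simp add: integrable_iff_bounded)
    finally have fin: "(\<integral>\<^sup>+\<omega>. B' \<omega> \<partial>M) * (\<integral>\<^sup>+\<omega>. h' \<omega> \<partial>M) < \<infinity>" using eq by simp
    have "(\<integral>\<^sup>+\<omega>. B' \<omega> \<partial>M) = (\<integral>\<^sup>+\<omega>. norm (B \<omega>) \<partial>M)"
      by (rule nn_integral_cong) (use B0 in \<open>auto simp: B'_def\<close>)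
    also have "\<dots> = \<infinity>" using nB by (simp add: integrable_iff_bounded) (metis less_top)
    finally have inf: "(\<integral>\<^sup>+\<omega>. B' \<omega> \<partial>M) = \<infinity>" .
    have h'0: "(\<integral>\<^sup>+\<omega>. h' \<omega> \<partial>M) = 0"
      using fin inf by (auto simp: ennreal_mult_less_top)
    have "(LINT \<omega>|M. h \<omega>) = enn2real (\<integral>\<^sup>+\<omega>. ennreal (h \<omega>) \<partial>M)"
      by (rule integral_eq_nn_integral) (use h0 in auto)
    also have "(\<integral>\<^sup>+\<omega>. ennreal (h \<omega>) \<partial>M) = (\<integral>\<^sup>+\<omega>. h' \<omega> \<partial>M)"
      by (simp add: h'_def)
    finally show ?thesis using h'0 by simp
  qed
  show "(LINT \<omega>|M. B \<omega> * h \<omega>) = (LINT \<omega>|M. B \<omega>) * (LINT \<omega>|M. h \<omega>)"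
  proof (cases "integrable M B")
    case True
    then show ?thesis using indep_var_lebesgue_integral[OF ind True hint] by simp
  next
    case False
    then have "(LINT \<omega>|M. h \<omega>) = 0" by (rule key)
    then have "AE \<omega> in M. h \<omega> = 0" using integral_nonneg_eq_0_iff_AE[OF hint] h0 by (auto intro!: AE_I2)
    then have "AE \<omega> in M. B \<omega> * h \<omega> = 0" by auto
    then have "(LINT \<omega>|M. B \<omega> * h \<omega>) = (LINT \<omega>|M. 0)" by (intro integral_cong_AE) auto
    then show ?thesis using \<open>(LINT \<omega>|M. h \<omega>) = 0\<close> by simp
  qed
  show "(LINT \<omega>|M. h \<omega>) \<noteq> 0 \<Longrightarrow> integrable M B" using key by blast
qed


lemma psi_meas: "is_wavelet psi \<Longrightarrow> psi \<in> borel_measurable borel"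
  unfolding is_wavelet_def by (simp add: measurable_lborel1)

lemma WX_joint:
  fixes M :: "'w measure"
  assumes X_meas: "(\<lambda>(\<omega>, u). X \<omega> u) \<in> borel_measurable (M \<Otimes>\<^sub>M lborel)"
    and pm: "psi \<in> borel_measurable borel"
  shows "(\<lambda>(\<omega>,u). complex_of_real (X \<omega> u) * psi_scale psi j (t - u)) \<in> borel_measurable (M \<Otimes>\<^sub>M lborel)"
proof -
  have [measurable]: "(\<lambda>x. X (fst x) (snd x)) \<in> borel_measurable (M \<Otimes>\<^sub>M lborel)"
    using X_meas by (simp add: case_prod_beta')
  have [measurable]: "psi \<in> borel_measurable borel" by fact
  show ?thesis unfolding psi_scale_def case_prod_beta' by measurable
qed

lemma WX_meas:
  fixes M :: "'w measure"
  assumes X_meas: "(\<lambda>(\<omega>, u). X \<omega> u) \<in> borel_measurable (M \<Otimes>\<^sub>M lborel)"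
    and pm: "psi \<in> borel_measurable borel"
  shows "(\<lambda>\<omega>. WX X psi \<omega> t j) \<in> borel_measurable M"
  unfolding WX_def
  using lborel.borel_measurable_lebesgue_integral[OF WX_joint[OF X_meas pm, of j t]] by simp

lemma WX_Fversion:
  fixes M F :: "'w measure"
  assumes prob: "prob_space M" and sub: "subalgebra M F"
    and X_meas: "(\<lambda>(\<omega>, u). X \<omega> u) \<in> borel_measurable (M \<Otimes>\<^sub>M lborel)"
    and pm: "psi \<in> borel_measurable borel"
    and XF: "\<And>u. (\<lambda>\<omega>. X \<omega> u) \<in> borel_measurable F"
    and conv_defined: "\<And>\<omega> t j. \<omega> \<in> space M \<Longrightarrow>
          integrable lborel (\<lambda>u. complex_of_real (X \<omega> u) * psi_scale psi j (t - u))"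
  shows "\<exists>g \<in> borel_measurable F. AE \<omega> in M. WX X psi \<omega> t j = g \<omega>"
proof -
  have [measurable]: "(\<lambda>x. X (fst x) (snd x)) \<in> borel_measurable (M \<Otimes>\<^sub>M lborel)"
    using X_meas by (simp add: case_prod_beta')
  have [measurable]: "psi \<in> borel_measurable borel" by fact
  define fr where "fr \<omega> u = Re (complex_of_real (X \<omega> u) * psi_scale psi j (t - u))" for \<omega> u
  define fi where "fi \<omega> u = Im (complex_of_real (X \<omega> u) * psi_scale psi j (t - u))" for \<omega> u
  have "\<exists>g \<in> borel_measurable F. AE \<omega> in M. (LINT u|lborel. fr \<omega> u) = g \<omega>"
  proof (rule key_general[OF prob sub])
    show "(\<lambda>(\<omega>, u). fr \<omega> u) \<in> borel_measurable (M \<Otimes>\<^sub>M lborel)"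
      unfolding fr_def psi_scale_def case_prod_beta' by measurable
    show "(\<lambda>\<omega>. fr \<omega> u) \<in> borel_measurable F" for u
      unfolding fr_def psi_scale_def using XF[of u] by measurable
    show "integrable lborel (fr \<omega>)" if "\<omega> \<in> space M" for \<omega>
      unfolding fr_def by (rule integrable_Re[OF conv_defined[OF that]])
  qed
  then obtain gr where gr: "gr \<in> borel_measurable F" "AE \<omega> in M. (LINT u|lborel. fr \<omega> u) = gr \<omega>" by blast
  have "\<exists>g \<in> borel_measurable F. AE \<omega> in M. (LINT u|lborel. fi \<omega> u) = g \<omega>"
  proof (rule key_general[OF prob sub])
    show "(\<lambda>(\<omega>, u). fi \<omega> u) \<in> borel_measurable (M \<Otimes>\<^sub>M lborel)"
      unfolding fi_def psi_scale_def case_prod_beta' by measurable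
    show "(\<lambda>\<omega>. fi \<omega> u) \<in> borel_measurable F" for u
      unfolding fi_def psi_scale_def using XF[of u] by measurable
    show "integrable lborel (fi \<omega>)" if "\<omega> \<in> space M" for \<omega>
      unfolding fi_def by (rule integrable_Im[OF conv_defined[OF that]])
  qed
  then obtain gi where gi: "gi \<in> borel_measurable F" "AE \<omega> in M. (LINT u|lborel. fi \<omega> u) = gi \<omega>" by blast
  define g where "g \<omega> = Complex (gr \<omega>) (gi \<omega>)" for \<omega>
  have "g \<in> borel_measurable F" unfolding g_def Complex_eq using gr(1) gi(1) by measurable
  moreover have "AE \<omega> in M. WX X psi \<omega> t j = g \<omega>"
    using gr(2) gi(2) AE_space
  proof (eventually_elim)
    case (elim \<omega>)
    have "Re (WX X psi \<omega> t j) = (LINT u|lborel. fr \<omega> u)" "Im (WX X psi \<omega> t j) = (LINT u|lborel. fi \<omega> u)"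
      by (simp_all only: WX_def fr_def fi_def integral_Re[OF conv_defined[OF elim(3), of j t]]
           integral_Im[OF conv_defined[OF elim(3), of j t]])
    then show ?case using elim unfolding g_def by (simp add: complex_eq_iff)
  qed
  ultimately show ?thesis by blast
qed

lemma distr_pair_integral:
  fixes M :: "'w measure" and U V :: "'i \<Rightarrow> 'w \<Rightarrow> complex"
    and G :: "complex \<Rightarrow> complex \<Rightarrow> 'b::{banach, second_countable_topology}"
  assumes eq: "distr M (PiM {p1, p2} (\<lambda>_. borel)) (\<lambda>\<omega>. \<lambda>p\<in>{p1,p2}. U p \<omega>)
             = distr M (PiM {p1, p2} (\<lambda>_. borel)) (\<lambda>\<omega>. \<lambda>p\<in>{p1,p2}. V p \<omega>)"
    and Um: "\<And>p. (U p) \<in> borel_measurable M" and Vm: "\<And>p. (V p) \<in> borel_measurable M"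
    and Gm: "(\<lambda>z. G (fst z) (snd z)) \<in> borel_measurable (borel \<Otimes>\<^sub>M borel)"
  shows "(LINT \<omega>|M. G (U p1 \<omega>) (U p2 \<omega>)) = (LINT \<omega>|M. G (V p1 \<omega>) (V p2 \<omega>))"
    and "integrable M (\<lambda>\<omega>. G (U p1 \<omega>) (U p2 \<omega>)) \<longleftrightarrow> integrable M (\<lambda>\<omega>. G (V p1 \<omega>) (V p2 \<omega>))"
proof -
  let ?P = "PiM {p1, p2} (\<lambda>_. borel :: complex measure)"
  have TU: "(\<lambda>\<omega>. \<lambda>p\<in>{p1,p2}. U p \<omega>) \<in> measurable M ?P"
    by (rule measurable_restrict) (use Um in auto)
  have TV: "(\<lambda>\<omega>. \<lambda>p\<in>{p1,p2}. V p \<omega>) \<in> measurable M ?P"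
    by (rule measurable_restrict) (use Vm in auto)
  have pr: "(\<lambda>x. (x p1, x p2)) \<in> measurable ?P (borel \<Otimes>\<^sub>M borel)"
    by (intro measurable_Pair measurable_component_singleton) auto
  have gm: "(\<lambda>x. G (x p1) (x p2)) \<in> borel_measurable ?P"
    using measurable_comp[OF pr Gm] by (simp add: comp_def)
  have "(LINT \<omega>|M. G (U p1 \<omega>) (U p2 \<omega>)) = integral\<^sup>L (distr M ?P (\<lambda>\<omega>. \<lambda>p\<in>{p1,p2}. U p \<omega>)) (\<lambda>x. G (x p1) (x p2))"
    by (subst integral_distr[OF TU gm]) simp
  also have "\<dots> = integral\<^sup>L (distr M ?P (\<lambda>\<omega>. \<lambda>p\<in>{p1,p2}. V p \<omega>)) (\<lambda>x. G (x p1) (x p2))"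
    using eq by simp
  also have "\<dots> = (LINT \<omega>|M. G (V p1 \<omega>) (V p2 \<omega>))"
    by (subst integral_distr[OF TV gm]) simp
  finally show "(LINT \<omega>|M. G (U p1 \<omega>) (U p2 \<omega>)) = (LINT \<omega>|M. G (V p1 \<omega>) (V p2 \<omega>))" .
  have "integrable M (\<lambda>\<omega>. G (U p1 \<omega>) (U p2 \<omega>)) \<longleftrightarrow> integrable (distr M ?P (\<lambda>\<omega>. \<lambda>p\<in>{p1,p2}. U p \<omega>)) (\<lambda>x. G (x p1) (x p2))"
    by (subst integrable_distr_eq[OF TU gm]) simp
  also have "\<dots> \<longleftrightarrow> integrable (distr M ?P (\<lambda>\<omega>. \<lambda>p\<in>{p1,p2}. V p \<omega>)) (\<lambda>x. G (x p1) (x p2))"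
    using eq by simp
  also have "\<dots> \<longleftrightarrow> integrable M (\<lambda>\<omega>. G (V p1 \<omega>) (V p2 \<omega>))"
    by (subst integrable_distr_eq[OF TV gm]) simp
  finally show "integrable M (\<lambda>\<omega>. G (U p1 \<omega>) (U p2 \<omega>)) \<longleftrightarrow> integrable M (\<lambda>\<omega>. G (V p1 \<omega>) (V p2 \<omega>))" .
qed

lemma ss_pair:
  fixes M :: "'w measure" and X :: "'w \<Rightarrow> real \<Rightarrow> real" and A :: "'w \<Rightarrow> real"
    and G :: "complex \<Rightarrow> complex \<Rightarrow> 'b::{banach, second_countable_topology}"
  assumes X_meas: "(\<lambda>(\<omega>, u). X \<omega> u) \<in> borel_measurable (M \<Otimes>\<^sub>M lborel)"
    and pm: "psi \<in> borel_measurable borel"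
    and Am: "A \<in> borel_measurable M"
    and ss: "\<forall>S. finite S \<longrightarrow> S \<subseteq> {(j, t). j \<le> J} \<longrightarrow>
           distr M (PiM S (\<lambda>_. borel)) (\<lambda>\<omega>. \<lambda>(j,t)\<in>S. WX X psi \<omega> t j) =
           distr M (PiM S (\<lambda>_. borel))
             (\<lambda>\<omega>. \<lambda>(j,t)\<in>S. complex_of_real (A \<omega>) *
                  WX X psi \<omega> (2 powr (- real l) * t) (j - int l))"
    and j: "ja \<le> J" "jb \<le> J"
    and Gm: "(\<lambda>z. G (fst z) (snd z)) \<in> borel_measurable (borel \<Otimes>\<^sub>M borel)"
  shows "(LINT \<omega>|M. G (WX X psi \<omega> ta ja) (WX X psi \<omega> tb jb)) =
         (LINT \<omega>|M. G (complex_of_real (A \<omega>) * WX X psi \<omega> (2 powr (- real l) * ta) (ja - int l))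
                       (complex_of_real (A \<omega>) * WX X psi \<omega> (2 powr (- real l) * tb) (jb - int l)))"
    and "integrable M (\<lambda>\<omega>. G (WX X psi \<omega> ta ja) (WX X psi \<omega> tb jb)) \<longleftrightarrow>
         integrable M (\<lambda>\<omega>. G (complex_of_real (A \<omega>) * WX X psi \<omega> (2 powr (- real l) * ta) (ja - int l))
                       (complex_of_real (A \<omega>) * WX X psi \<omega> (2 powr (- real l) * tb) (jb - int l)))"
proof -
  have eq: "distr M (PiM {(ja,ta),(jb,tb)} (\<lambda>_. borel)) (\<lambda>\<omega>. \<lambda>p\<in>{(ja,ta),(jb,tb)}. (\<lambda>p \<omega>. case p of (j,t) \<Rightarrow> WX X psi \<omega> t j) p \<omega>)
     = distr M (PiM {(ja,ta),(jb,tb)} (\<lambda>_. borel)) (\<lambda>\<omega>. \<lambda>p\<in>{(ja,ta),(jb,tb)}. (\<lambda>p \<omega>. case p of (j,t) \<Rightarrow> complex_of_real (A \<omega>) *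
                  WX X psi \<omega> (2 powr (- real l) * t) (j - int l)) p \<omega>)"
    using ss[rule_format, of "{(ja,ta),(jb,tb)}"] j by simp
  have Um: "(\<lambda>p \<omega>. case p of (j,t) \<Rightarrow> WX X psi \<omega> t j) p \<in> borel_measurable M" for p
    by (cases p) (simp add: WX_meas[OF X_meas pm])
  have Vm: "(\<lambda>p \<omega>. case p of (j,t) \<Rightarrow> complex_of_real (A \<omega>) *
                  WX X psi \<omega> (2 powr (- real l) * t) (j - int l)) p \<in> borel_measurable M" for p
    using WX_meas[OF X_meas pm] Am by (cases p) (simp add: borel_measurable_times)
  show "(LINT \<omega>|M. G (WX X psi \<omega> ta ja) (WX X psi \<omega> tb jb)) =
         (LINT \<omega>|M. G (complex_of_real (A \<omega>) * WX X psi \<omega> (2 powr (- real l) * ta) (ja - int l))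
                       (complex_of_real (A \<omega>) * WX X psi \<omega> (2 powr (- real l) * tb) (jb - int l)))"
    using distr_pair_integral(1)[OF eq Um Vm Gm] by simp
  show "integrable M (\<lambda>\<omega>. G (WX X psi \<omega> ta ja) (WX X psi \<omega> tb jb)) \<longleftrightarrow>
         integrable M (\<lambda>\<omega>. G (complex_of_real (A \<omega>) * WX X psi \<omega> (2 powr (- real l) * ta) (ja - int l))
                       (complex_of_real (A \<omega>) * WX X psi \<omega> (2 powr (- real l) * tb) (jb - int l)))"
    using distr_pair_integral(2)[OF eq Um Vm Gm] by simp
qed

lemma st_pair:
  fixes M :: "'w measure" and X :: "'w \<Rightarrow> real \<Rightarrow> real"
    and G :: "complex \<Rightarrow> complex \<Rightarrow> 'b::{banach, second_countable_topology}"
  assumes X_meas: "(\<lambda>(\<omega>, u). X \<omega> u) \<in> borel_measurable (M \<Otimes>\<^sub>M lborel)"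
    and pm: "psi \<in> borel_measurable borel"
    and W_stat: "WX_stationary M X psi"
    and Gm: "(\<lambda>z. G (fst z) (snd z)) \<in> borel_measurable (borel \<Otimes>\<^sub>M borel)"
  shows "(LINT \<omega>|M. G (WX X psi \<omega> (ta + h) ja) (WX X psi \<omega> (tb + h) jb)) =
         (LINT \<omega>|M. G (WX X psi \<omega> ta ja) (WX X psi \<omega> tb jb))"
    and "integrable M (\<lambda>\<omega>. G (WX X psi \<omega> (ta + h) ja) (WX X psi \<omega> (tb + h) jb)) \<longleftrightarrow>
         integrable M (\<lambda>\<omega>. G (WX X psi \<omega> ta ja) (WX X psi \<omega> tb jb))"
proof -
  have eq: "distr M (PiM {(ja,ta),(jb,tb)} (\<lambda>_. borel)) (\<lambda>\<omega>. \<lambda>p\<in>{(ja,ta),(jb,tb)}. (\<lambda>p \<omega>. case p of (j,t) \<Rightarrow> WX X psi \<omega> (t + h) j) p \<omega>)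
     = distr M (PiM {(ja,ta),(jb,tb)} (\<lambda>_. borel)) (\<lambda>\<omega>. \<lambda>p\<in>{(ja,ta),(jb,tb)}. (\<lambda>p \<omega>. case p of (j,t) \<Rightarrow> WX X psi \<omega> t j) p \<omega>)"
    using W_stat unfolding WX_stationary_def by simp
  have Um: "(\<lambda>p \<omega>. case p of (j,t) \<Rightarrow> WX X psi \<omega> (t + h) j) p \<in> borel_measurable M" for p
    by (cases p) (simp add: WX_meas[OF X_meas pm])
  have Vm: "(\<lambda>p \<omega>. case p of (j,t) \<Rightarrow> WX X psi \<omega> t j) p \<in> borel_measurable M" for p
    by (cases p) (simp add: WX_meas[OF X_meas pm])
  show "(LINT \<omega>|M. G (WX X psi \<omega> (ta + h) ja) (WX X psi \<omega> (tb + h) jb)) =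
         (LINT \<omega>|M. G (WX X psi \<omega> ta ja) (WX X psi \<omega> tb jb))"
    using distr_pair_integral(1)[OF eq Um Vm Gm] by simp
  show "integrable M (\<lambda>\<omega>. G (WX X psi \<omega> (ta + h) ja) (WX X psi \<omega> (tb + h) jb)) \<longleftrightarrow>
         integrable M (\<lambda>\<omega>. G (WX X psi \<omega> ta ja) (WX X psi \<omega> tb jb))"
    using distr_pair_integral(2)[OF eq Um Vm Gm] by simp
qed


lemma power_law:
  fixes m :: "int \<Rightarrow> real" and a :: real and J :: int
  assumes a0: "a \<ge> 0" and rec: "\<And>j. j \<le> J \<Longrightarrow> m j = a * m (j - 1)"
  shows "\<exists>c \<zeta>. \<forall>j. j \<le> J \<longrightarrow> m j = c * 2 powr (real_of_int j * \<zeta>)"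
proof (cases "a = 0")
  case True
  then show ?thesis using rec by (intro exI[of _ 0]) auto
next
  case False
  then have apos: "a > 0" using a0 by simp
  have ind: "m (J - int n) = m J * a powr (- real n)" for n
  proof (induction n)
    case 0
    then show ?case using apos by simp
  next
    case (Suc n)
    have "m (J - int n) = a * m (J - int n - 1)" using rec[of "J - int n"] by simp
    then have "m (J - int (Suc n)) = m (J - int n) / a" using apos by (simp add: algebra_simps)
    also have "\<dots> = m J * a powr (- real n) / a" using Suc by simp
    also have "\<dots> = m J * a powr (- real (Suc n))"
      using apos by (simp add: powr_diff powr_minus divide_simps)
    finally show ?case .
  qed
  show ?thesis
  proof (intro exI allI impI)
    fix j assume j: "j \<le> J"
    have "m j = m J * a powr (- real (nat (J - j)))" using ind[of "nat (J - j)"] j by simp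
    also have "- real (nat (J - j)) = real_of_int j - real_of_int J" using j by simp
    also have "m J * a powr (real_of_int j - real_of_int J) = (m J / a powr real_of_int J) * a powr real_of_int j"
      using apos by (simp add: powr_diff)
    also have "a powr real_of_int j = 2 powr (real_of_int j * log 2 a)"
    proof -
      have "2 powr (real_of_int j * log 2 a) = (2 powr log 2 a) powr real_of_int j"
        by (simp add: powr_powr mult.commute)
      also have "\<dots> = a powr real_of_int j" using apos by simp
      finally show ?thesis by simp
    qed
    finally show "m j = (m J / a powr real_of_int J) * 2 powr (real_of_int j * log 2 a)" .
  qed
qed

lemma rho_nth: "rho z $ k = (if k = 1 then z else complex_of_real (cmod z))"
  using exhaust_2[of k] unfolding rho_def by auto

lemma rho_meas[measurable (raw)]:
  "f \<in> borel_measurable M \<Longrightarrow> (\<lambda>x. rho (f x) $ k) \<in> borel_measurable M"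
  by (cases "k = 1") (simp_all add: rho_nth)

lemma cnj_meas[measurable (raw)]:
  "f \<in> borel_measurable M \<Longrightarrow> (\<lambda>x. cnj (f x)) \<in> borel_measurable M"
  by (rule borel_measurable_continuous_on[where f=cnj]) (auto intro: continuous_intros)

lemma rho_norm: "cmod (rho z $ k) = cmod z"
  by (simp add: rho_nth)

lemma rho_scale: "c \<ge> 0 \<Longrightarrow> rho (complex_of_real c * z) $ k = complex_of_real c * rho z $ k"
  by (simp add: rho_nth norm_mult)

lemma scale_core:
  fixes M F :: "'w measure" and A h :: "'w \<Rightarrow> real"
  assumes prob: "prob_space M" and sub: "subalgebra M F"
    and ind: "prob_space.indep_set M (sigma_sets (space M) {A -` B \<inter> space M | B. B \<in> sets borel}) (sets F)"
    and Am: "A \<in> borel_measurable M" and A0: "\<And>\<omega>. \<omega> \<in> space M \<Longrightarrow> 0 < A \<omega>"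
    and hm: "h \<in> borel_measurable M" and h0: "\<And>\<omega>. \<omega> \<in> space M \<Longrightarrow> 0 \<le> h \<omega>"
    and hF: "\<exists>g\<in>borel_measurable F. AE \<omega> in M. h \<omega> = g \<omega>"
    and int: "integrable M (\<lambda>\<omega>. A \<omega> ^ p * h \<omega>)" and hint: "integrable M h"
  shows "(LINT \<omega>|M. A \<omega> ^ p * h \<omega>) = (LINT \<omega>|M. A \<omega> ^ p) * (LINT \<omega>|M. h \<omega>)"
    and "(LINT \<omega>|M. h \<omega>) \<noteq> 0 \<Longrightarrow> integrable M (\<lambda>\<omega>. A \<omega> ^ p)"
proof -
  interpret prob_space M by fact
  obtain g where gF: "g \<in> borel_measurable F" and hg: "AE \<omega> in M. h \<omega> = g \<omega>" using hF by blast
  define g' where "g' \<omega> = max 0 (g \<omega>)" for \<omega>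
  have g'F: "g' \<in> borel_measurable F" unfolding g'_def using gF by measurable
  have g'M: "g' \<in> borel_measurable M" using measurable_from_subalg[OF sub g'F] .
  have hg': "AE \<omega> in M. h \<omega> = g' \<omega>" using hg AE_space
  proof eventually_elim
    case (elim \<omega>)
    then show ?case using h0[of \<omega>] by (simp add: g'_def)
  qed
  have iv: "indep_var borel (\<lambda>\<omega>. A \<omega> ^ p) borel g'"
    by (rule indep_from_sets[OF prob sub ind Am _ g'F]) simp
  have ApM: "(\<lambda>\<omega>. A \<omega> ^ p) \<in> borel_measurable M" using Am by measurable
  have int': "integrable M (\<lambda>\<omega>. A \<omega> ^ p * g' \<omega>)"
    using int by (rule integrable_cong_AE_imp) (use ApM g'M hg' in auto)
  have hint': "integrable M g'"
    using hint by (rule integrable_cong_AE_imp) (use g'M hg' in auto)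
  have e1: "(LINT \<omega>|M. A \<omega> ^ p * h \<omega>) = (LINT \<omega>|M. A \<omega> ^ p * g' \<omega>)"
    by (rule integral_cong_AE) (use ApM hm g'M hg' in auto)
  have e2: "(LINT \<omega>|M. h \<omega>) = (LINT \<omega>|M. g' \<omega>)"
    by (rule integral_cong_AE) (use hm g'M hg' in auto)
  have nn: "\<And>\<omega>. \<omega> \<in> space M \<Longrightarrow> 0 \<le> A \<omega> ^ p" using A0 by (simp add: less_imp_le)
  show "(LINT \<omega>|M. A \<omega> ^ p * h \<omega>) = (LINT \<omega>|M. A \<omega> ^ p) * (LINT \<omega>|M. h \<omega>)"
    using indep_mult_nonneg(1)[OF prob iv nn _ int' hint'] e1 e2 by (simp add: g'_def)
  show "(LINT \<omega>|M. h \<omega>) \<noteq> 0 \<Longrightarrow> integrable M (\<lambda>\<omega>. A \<omega> ^ p)"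
    using indep_mult_nonneg(2)[OF prob iv nn _ int' hint'] e2 by (simp add: g'_def)
qed

lemma scale_complex:
  fixes M F :: "'w measure" and A :: "'w \<Rightarrow> real" and Y :: "'w \<Rightarrow> complex"
  assumes prob: "prob_space M" and sub: "subalgebra M F"
    and ind: "prob_space.indep_set M (sigma_sets (space M) {A -` B \<inter> space M | B. B \<in> sets borel}) (sets F)"
    and Am: "A \<in> borel_measurable M"
    and Ym: "Y \<in> borel_measurable M"
    and YF: "\<exists>g\<in>borel_measurable F. AE \<omega> in M. Y \<omega> = g \<omega>"
    and Aint: "integrable M (\<lambda>\<omega>. A \<omega> ^ p)" and Yint: "integrable M Y"
  shows "(LINT \<omega>|M. complex_of_real (A \<omega> ^ p) * Y \<omega>) = complex_of_real (LINT \<omega>|M. A \<omega> ^ p) * (LINT \<omega>|M. Y \<omega>)"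
proof -
  interpret prob_space M by fact
  obtain g where gF: "g \<in> borel_measurable F" and Yg: "AE \<omega> in M. Y \<omega> = g \<omega>" using YF by blast
  have gM: "g \<in> borel_measurable M" using measurable_from_subalg[OF sub gF] .
  have iv: "indep_var borel (\<lambda>\<omega>. complex_of_real (A \<omega> ^ p)) borel g"
    by (rule indep_from_sets[OF prob sub ind Am _ gF]) simp
  have ApM: "(\<lambda>\<omega>. complex_of_real (A \<omega> ^ p)) \<in> borel_measurable M" using Am by measurable
  have gint: "integrable M g"
    using Yint by (rule integrable_cong_AE_imp) (use gM Yg in auto)
  have "(LINT \<omega>|M. complex_of_real (A \<omega> ^ p) * Y \<omega>) = (LINT \<omega>|M. complex_of_real (A \<omega> ^ p) * g \<omega>)"
    by (rule integral_cong_AE) (use ApM Ym gM Yg in auto)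
  also have "\<dots> = (LINT \<omega>|M. complex_of_real (A \<omega> ^ p)) * (LINT \<omega>|M. g \<omega>)"
  proof (rule indep_var_lebesgue_integral[OF iv _ gint])
    show "integrable M (\<lambda>\<omega>. complex_of_real (A \<omega> ^ p))"
      using integrable_of_real[OF Aint] by simp
  qed
  also have "(LINT \<omega>|M. g \<omega>) = (LINT \<omega>|M. Y \<omega>)"
    by (rule integral_cong_AE) (use Ym gM Yg in auto)
  also have "(LINT \<omega>|M. complex_of_real (A \<omega> ^ p)) = complex_of_real (LINT \<omega>|M. A \<omega> ^ p)"
    by (rule integral_complex_of_real)
  finally show ?thesis .
qed


theorem theorem1:
  fixes M :: "'w measure" and X :: "'w \<Rightarrow> real \<Rightarrow> real"
    and psi :: "real \<Rightarrow> complex" and J :: int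
  assumes prob: "prob_space M"
    and X_meas: "(\<lambda>(\<omega>, u). X \<omega> u) \<in> borel_measurable (M \<Otimes>\<^sub>M lborel)"
    and wavelet: "is_wavelet psi"
    and conv_defined: "\<And>\<omega> t j. \<omega> \<in> space M \<Longrightarrow>
          integrable lborel (\<lambda>u. complex_of_real (X \<omega> u) * psi_scale psi j (t - u))"
    and incr: "stationary_increments M X"
    and W_stat: "WX_stationary M X psi"
    and mom1: "\<And>t j. integrable M (\<lambda>\<omega>. cmod (WX X psi \<omega> t j))"
    and mom2: "\<And>t j. integrable M (\<lambda>\<omega>. (cmod (WX X psi \<omega> t j))\<^sup>2)"
    and selfsim: "self_similar_upto M X psi J"
  shows "\<exists>c1 c2 \<zeta>1 \<zeta>2 :: real.
           (\<forall>j t. j \<le> J \<longrightarrow>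
              (LINT \<omega>|M. cmod (WX X psi \<omega> t j)) = c1 * 2 powr (real_of_int j * \<zeta>1) \<and>
              (LINT \<omega>|M. (cmod (WX X psi \<omega> t j))\<^sup>2) = c2 * 2 powr (real_of_int j * \<zeta>2)) \<and>
           (\<forall>\<tau> t j a. j \<le> J \<and> j - a \<le> J \<and> 0 \<le> J \<and> - a \<le> J \<longrightarrow>
              C_rhoW M X psi t \<tau> j a = C_rhoW M X psi t \<tau> 0 a)"
proof -
  interpret prob_space M by fact
  have pm[measurable]: "psi \<in> borel_measurable borel" using psi_meas[OF wavelet] .
  have Xm[measurable]: "(\<lambda>x. X (fst x) (snd x)) \<in> borel_measurable (M \<Otimes>\<^sub>M lborel)"
    using X_meas by (simp add: case_prod_beta')
  have Wm[measurable]: "(\<lambda>\<omega>. WX X psi \<omega> t j) \<in> borel_measurable M" for t j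
    using WX_meas[OF X_meas pm] .
  define gens where "gens = {(\<lambda>\<omega>. X \<omega> t) -` B \<inter> space M | B t. B \<in> sets (borel :: real measure)}"
  define Fm where "Fm = sigma (space M) gens"
  have Xt: "(\<lambda>\<omega>. X \<omega> t) \<in> borel_measurable M" for t
    using measurable_Pair1[OF X_meas, of t] by simp
  have gens_sub: "gens \<subseteq> sets M"
    unfolding gens_def using Xt by (auto intro: measurable_sets)
  have gens_pow: "gens \<subseteq> Pow (space M)" unfolding gens_def by auto
  have sets_Fm: "sets Fm = sigma_sets (space M) gens"
    unfolding Fm_def using gens_pow by (rule sets_measure_of)
  have space_Fm: "space Fm = space M"
    unfolding Fm_def using gens_pow by (rule space_measure_of)
  have sub: "subalgebra M Fm"
    unfolding subalgebra_def using space_Fm sets_Fm sets.sigma_sets_subset[OF gens_sub] by simp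
  have XF: "(\<lambda>\<omega>. X \<omega> u) \<in> borel_measurable Fm" for u
  proof (rule measurableI)
    fix B :: "real set" assume "B \<in> sets borel"
    then have "(\<lambda>\<omega>. X \<omega> u) -` B \<inter> space M \<in> gens" unfolding gens_def by blast
    then show "(\<lambda>\<omega>. X \<omega> u) -` B \<inter> space Fm \<in> sets Fm"
      unfolding sets_Fm space_Fm by blast
  qed simp
  have WF: "\<exists>g\<in>borel_measurable Fm. AE \<omega> in M. WX X psi \<omega> t j = g \<omega>" for t j
    by (rule WX_Fversion[OF prob sub X_meas pm XF conv_defined])
  obtain Af where Af: "\<And>l. log_inf_div M (Af l)"
    "\<And>l. indep_set (sigma_sets (space M) {Af l -` B \<inter> space M | B. B \<in> sets borel}) (sets Fm)"
    "\<And>l. \<forall>S. finite S \<longrightarrow> S \<subseteq> {(j, t). j \<le> J} \<longrightarrow>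
           distr M (PiM S (\<lambda>_. borel)) (\<lambda>\<omega>. \<lambda>(j,t)\<in>S. WX X psi \<omega> t j) =
           distr M (PiM S (\<lambda>_. borel))
             (\<lambda>\<omega>. \<lambda>(j,t)\<in>S. complex_of_real (Af l \<omega>) *
                  WX X psi \<omega> (2 powr (- real l) * t) (j - int l))"
  proof -
    have sF: "sets Fm = sigma_sets (space M) {(\<lambda>\<omega>. X \<omega> t) -` B \<inter> space M | B t. B \<in> sets borel}"
      using sets_Fm unfolding gens_def .
    show ?thesis using choice[OF selfsim[unfolded self_similar_upto_def sF[symmetric]]] that by blast
  qed
  have Am[measurable]: "Af l \<in> borel_measurable M" for l using Af(1)[of l] by (simp add: log_inf_div_def)
  have A0: "\<And>\<omega>. \<omega> \<in> space M \<Longrightarrow> 0 < Af l \<omega>" for l using Af(1)[of l] by (simp add: log_inf_div_def)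
  have scale_h: "(LINT \<omega>|M. cmod (WX X psi \<omega> t j) ^ p) = (LINT \<omega>|M. Af l \<omega> ^ p) *
        (LINT \<omega>|M. cmod (WX X psi \<omega> (2 powr (- real l) * t) (j - int l)) ^ p) \<and>
      ((LINT \<omega>|M. cmod (WX X psi \<omega> (2 powr (- real l) * t) (j - int l)) ^ p) \<noteq> 0 \<longrightarrow>
        integrable M (\<lambda>\<omega>. Af l \<omega> ^ p))"
    if jJ: "j \<le> J" and mom: "\<And>t j. integrable M (\<lambda>\<omega>. cmod (WX X psi \<omega> t j) ^ p)" for l j t p
  proof -
    define V where "V \<omega> = WX X psi \<omega> (2 powr (- real l) * t) (j - int l)" for \<omega>
    have Vm[measurable]: "V \<in> borel_measurable M" unfolding V_def by simp
    have Gm: "(\<lambda>z. cmod (fst z) ^ p) \<in> borel_measurable (borel \<Otimes>\<^sub>M borel)" by measurable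
    note ss = ss_pair[OF X_meas pm Am[of l] Af(3)[of l] jJ jJ, where G="\<lambda>z1 z2. cmod z1 ^ p" and ta=t and tb=t, OF Gm]
    have pt: "cmod (complex_of_real (Af l \<omega>) * V \<omega>) ^ p = Af l \<omega> ^ p * cmod (V \<omega>) ^ p"
      if "\<omega> \<in> space M" for \<omega>
      using A0[OF that, of l] by (simp add: norm_mult power_mult_distrib)
    have e1: "(LINT \<omega>|M. cmod (WX X psi \<omega> t j) ^ p) = (LINT \<omega>|M. Af l \<omega> ^ p * cmod (V \<omega>) ^ p)"
    proof -
      have "(LINT \<omega>|M. cmod (WX X psi \<omega> t j) ^ p) = (LINT \<omega>|M. cmod (complex_of_real (Af l \<omega>) * V \<omega>) ^ p)"
        using ss(1) unfolding V_def .
      also have "\<dots> = (LINT \<omega>|M. Af l \<omega> ^ p * cmod (V \<omega>) ^ p)"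
        by (rule Bochner_Integration.integral_cong) (use pt in auto)
      finally show ?thesis .
    qed
    have i1: "integrable M (\<lambda>\<omega>. Af l \<omega> ^ p * cmod (V \<omega>) ^ p)"
    proof -
      have "integrable M (\<lambda>\<omega>. cmod (complex_of_real (Af l \<omega>) * V \<omega>) ^ p)"
        using ss(2) mom[of t j] unfolding V_def by simp
      then show ?thesis by (rule integrable_cong_AE_imp) (use pt in \<open>auto intro!: AE_I2\<close>)
    qed
    have hF: "\<exists>g\<in>borel_measurable Fm. AE \<omega> in M. cmod (V \<omega>) ^ p = g \<omega>"
    proof -
      obtain g where g: "g \<in> borel_measurable Fm" "AE \<omega> in M. V \<omega> = g \<omega>"
        using WF unfolding V_def by blast
      have "AE \<omega> in M. cmod (V \<omega>) ^ p = cmod (g \<omega>) ^ p" using g(2) by eventually_elim simp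
      moreover have "(\<lambda>\<omega>. cmod (g \<omega>) ^ p) \<in> borel_measurable Fm" using g(1) by measurable
      ultimately show ?thesis by (auto intro!: bexI[of _ "\<lambda>\<omega>. cmod (g \<omega>) ^ p"])
    qed
    have hm: "(\<lambda>\<omega>. cmod (V \<omega>) ^ p) \<in> borel_measurable M" by measurable
    have h0: "\<And>\<omega>. \<omega> \<in> space M \<Longrightarrow> 0 \<le> cmod (V \<omega>) ^ p" by simp
    note sc = scale_core[OF prob sub Af(2)[of l] Am[of l] A0 hm h0 hF i1]
    show ?thesis using sc e1 mom unfolding V_def by auto
  qed
  have shift_p: "(LINT \<omega>|M. cmod (WX X psi \<omega> t j) ^ p) = (LINT \<omega>|M. cmod (WX X psi \<omega> 0 j) ^ p)" for t j p
  proof -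
    have Gm: "(\<lambda>z. cmod (fst z) ^ p) \<in> borel_measurable (borel \<Otimes>\<^sub>M borel)" by measurable
    show ?thesis
      using st_pair(1)[OF X_meas pm W_stat, where G="\<lambda>z1 z2. cmod z1 ^ p" and ta=0 and tb=0 and h=t and ja=j and jb=j, OF Gm]
      by simp
  qed
  have law: "\<exists>c \<zeta>. \<forall>j. j \<le> J \<longrightarrow> (LINT \<omega>|M. cmod (WX X psi \<omega> 0 j) ^ p) = c * 2 powr (real_of_int j * \<zeta>)"
    if mom: "\<And>t j. integrable M (\<lambda>\<omega>. cmod (WX X psi \<omega> t j) ^ p)" for p
  proof (rule power_law)
    show "0 \<le> (LINT \<omega>|M. Af 1 \<omega> ^ p)"
      by (rule integral_nonneg_AE) (use A0 in \<open>auto intro!: AE_I2 less_imp_le\<close>)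
    fix j assume "j \<le> J"
    from conjunct1[OF scale_h[OF this mom, of 0 1]]
    show "(LINT \<omega>|M. cmod (WX X psi \<omega> 0 j) ^ p) = (LINT \<omega>|M. Af 1 \<omega> ^ p) * (LINT \<omega>|M. cmod (WX X psi \<omega> 0 (j - 1)) ^ p)"
      by simp
  qed
  obtain c1 z1 where c1: "\<And>j. j \<le> J \<Longrightarrow> (LINT \<omega>|M. cmod (WX X psi \<omega> 0 j) ^ 1) = c1 * 2 powr (real_of_int j * z1)"
    using law[of 1] mom1 by auto
  obtain c2 z2 where c2: "\<And>j. j \<le> J \<Longrightarrow> (LINT \<omega>|M. cmod (WX X psi \<omega> 0 j) ^ 2) = c2 * 2 powr (real_of_int j * z2)"
    using law[of 2] mom2 by auto
  have part1: "\<forall>j t. j \<le> J \<longrightarrow>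
              (LINT \<omega>|M. cmod (WX X psi \<omega> t j)) = c1 * 2 powr (real_of_int j * z1) \<and>
              (LINT \<omega>|M. (cmod (WX X psi \<omega> t j))\<^sup>2) = c2 * 2 powr (real_of_int j * z2)"
  proof (intro allI impI conjI)
    fix j t assume j: "j \<le> J"
    show "(LINT \<omega>|M. cmod (WX X psi \<omega> t j)) = c1 * 2 powr (real_of_int j * z1)"
      using shift_p[of t j 1] c1[OF j] by simp
    show "(LINT \<omega>|M. (cmod (WX X psi \<omega> t j))\<^sup>2) = c2 * 2 powr (real_of_int j * z2)"
      using shift_p[of t j 2] c2[OF j] by simp
  qed
  have Lstep: "C_rhoW M X psi t \<tau> j0 a = C_rhoW M X psi t \<tau> (j0 - int l) a"
    if j0J: "j0 \<le> J" and jaJ: "j0 - a \<le> J" for t \<tau> j0 a l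
  proof -
    define s where "s = 2 powr (- real l)"
    define t2 where "t2 = t - 2 powr (real_of_int j0) * \<tau>"
    define hh where "hh = t - s * t"
    have e_t1: "s * t + hh = t" unfolding hh_def by simp
    have e_t2: "s * t2 + hh = t - 2 powr (real_of_int (j0 - int l)) * \<tau>"
    proof -
      have "2 powr (real_of_int (j0 - int l)) = s * 2 powr (real_of_int j0)"
        unfolding s_def by (simp add: powr_add[symmetric])
      then show ?thesis unfolding t2_def hh_def by (simp add: algebra_simps)
    qed
    have e_j2: "j0 - a - int l = j0 - int l - a" by simp
    have mom2p: "integrable M (\<lambda>\<omega>. cmod (WX X psi \<omega> t j) ^ 2)" for t j using mom2 by simp
    define q1 where "q1 = (LINT \<omega>|M. cmod (WX X psi \<omega> (s * t) (j0 - int l)) ^ 2)"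
    define q2 where "q2 = (LINT \<omega>|M. cmod (WX X psi \<omega> (s * t2) (j0 - a - int l)) ^ 2)"
    define c where "c = (LINT \<omega>|M. Af l \<omega> ^ 2)"
    have sc1: "(LINT \<omega>|M. cmod (WX X psi \<omega> t j0) ^ 2) = c * q1 \<and> (q1 \<noteq> 0 \<longrightarrow> integrable M (\<lambda>\<omega>. Af l \<omega> ^ 2))"
      using scale_h[OF j0J mom2p, of t l] unfolding c_def q1_def s_def by simp
    have sc2: "(LINT \<omega>|M. cmod (WX X psi \<omega> t2 (j0 - a)) ^ 2) = c * q2 \<and> (q2 \<noteq> 0 \<longrightarrow> integrable M (\<lambda>\<omega>. Af l \<omega> ^ 2))"
      using scale_h[OF jaJ mom2p, of t2 l] unfolding c_def q2_def s_def by simp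
    have u1: "(LINT \<omega>|M. cmod (WX X psi \<omega> t (j0 - int l)) ^ 2) = q1"
      unfolding q1_def using shift_p[of t _ 2] shift_p[of "s * t" _ 2] by simp
    have u2: "(LINT \<omega>|M. cmod (WX X psi \<omega> (t - 2 powr (real_of_int (j0 - int l)) * \<tau>) (j0 - int l - a)) ^ 2) = q2"
      unfolding q2_def e_j2 using shift_p[of "t - 2 powr (real_of_int (j0 - int l)) * \<tau>" _ 2] shift_p[of "s * t2" _ 2] by simp
    have sigL1: "sigmaW M X psi t j0 = sqrt (c * q1)"
      unfolding sigmaW_def using sc1 by (simp add: power2_eq_square)
    have sigL2: "sigmaW M X psi (t - 2 powr (real_of_int j0) * \<tau>) (j0 - a) = sqrt (c * q2)"
      unfolding sigmaW_def t2_def[symmetric] using sc2 by (simp add: power2_eq_square)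
    have sigR1: "sigmaW M X psi t (j0 - int l) = sqrt q1"
      unfolding sigmaW_def using u1 by (simp add: power2_eq_square)
    have sigR2: "sigmaW M X psi (t - 2 powr (real_of_int (j0 - int l)) * \<tau>) (j0 - int l - a) = sqrt q2"
      unfolding sigmaW_def using u2 by (simp add: power2_eq_square)
    have q1nn: "q1 \<ge> 0" unfolding q1_def by simp
    have q2nn: "q2 \<ge> 0" unfolding q2_def by simp
    have c0: "c \<ge> 0" unfolding c_def by simp
    show ?thesis
    proof (cases "q1 = 0 \<or> q2 = 0")
      case True
      then have z1: "sigmaW M X psi t j0 * sigmaW M X psi (t - 2 powr (real_of_int j0) * \<tau>) (j0 - a) = 0"
        and z2: "sigmaW M X psi t (j0 - int l) * sigmaW M X psi (t - 2 powr (real_of_int (j0 - int l)) * \<tau>) (j0 - int l - a) = 0"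
        unfolding sigL1 sigL2 sigR1 sigR2 by auto
      show ?thesis unfolding C_rhoW_def z1 z2 by (simp add: vec_eq_iff)
    next
      case False
      then have q1p: "q1 \<noteq> 0" and q2p: "q2 \<noteq> 0" by auto
      have Aint: "integrable M (\<lambda>\<omega>. Af l \<omega> ^ 2)" using sc1 q1p by blast
      have cpos: "c > 0"
      proof (rule ccontr)
        assume "\<not> c > 0"
        then have "c = 0" using c0 by simp
        then have "AE \<omega> in M. Af l \<omega> ^ 2 = 0"
          using integral_nonneg_eq_0_iff_AE[OF Aint] unfolding c_def by simp
        then have "AE \<omega> in M. False" using AE_space
        proof eventually_elim
          case (elim \<omega>)
          then show ?case using A0[of \<omega> l] by simp
        qed
        then show False by simp
      qed
      have num: "(LINT \<omega>|M. rho (WX X psi \<omega> t j0) $ k * cnj (rho (WX X psi \<omega> t2 (j0 - a)) $ k')) =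
          complex_of_real c * (LINT \<omega>|M. rho (WX X psi \<omega> t (j0 - int l)) $ k *
             cnj (rho (WX X psi \<omega> (t - 2 powr (real_of_int (j0 - int l)) * \<tau>) (j0 - int l - a)) $ k'))" for k k'
      proof -
        have Gm: "(\<lambda>z. rho (fst z) $ k * cnj (rho (snd z) $ k')) \<in> borel_measurable (borel \<Otimes>\<^sub>M borel)"
          by measurable
        define V1 where "V1 \<omega> = WX X psi \<omega> (s * t) (j0 - int l)" for \<omega>
        define V2 where "V2 \<omega> = WX X psi \<omega> (s * t2) (j0 - a - int l)" for \<omega>
        have V1m[measurable]: "V1 \<in> borel_measurable M" unfolding V1_def by simp
        have V2m[measurable]: "V2 \<in> borel_measurable M" unfolding V2_def by simp
        have "(LINT \<omega>|M. rho (WX X psi \<omega> t j0) $ k * cnj (rho (WX X psi \<omega> t2 (j0 - a)) $ k')) =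
            (LINT \<omega>|M. rho (complex_of_real (Af l \<omega>) * V1 \<omega>) $ k * cnj (rho (complex_of_real (Af l \<omega>) * V2 \<omega>) $ k'))"
          using ss_pair(1)[OF X_meas pm Am[of l] Af(3)[of l] j0J jaJ, where G="\<lambda>z1 z2. rho z1 $ k * cnj (rho z2 $ k')" and ta=t and tb=t2, OF Gm]
          unfolding V1_def V2_def s_def by simp
        also have "\<dots> = (LINT \<omega>|M. complex_of_real (Af l \<omega> ^ 2) * (rho (V1 \<omega>) $ k * cnj (rho (V2 \<omega>) $ k')))"
        proof (rule Bochner_Integration.integral_cong[OF refl])
          fix \<omega> assume "\<omega> \<in> space M"
          then have "Af l \<omega> \<ge> 0" using A0 less_imp_le by blast
          then show "rho (complex_of_real (Af l \<omega>) * V1 \<omega>) $ k * cnj (rho (complex_of_real (Af l \<omega>) * V2 \<omega>) $ k') =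
              complex_of_real (Af l \<omega> ^ 2) * (rho (V1 \<omega>) $ k * cnj (rho (V2 \<omega>) $ k'))"
            by (simp add: rho_scale power2_eq_square)
        qed
        also have "\<dots> = complex_of_real c * (LINT \<omega>|M. rho (V1 \<omega>) $ k * cnj (rho (V2 \<omega>) $ k'))"
          unfolding c_def
        proof (rule scale_complex[OF prob sub Af(2)[of l] Am[of l] _ _ Aint])
          show "(\<lambda>\<omega>. rho (V1 \<omega>) $ k * cnj (rho (V2 \<omega>) $ k')) \<in> borel_measurable M" by measurable
          obtain g1 where g1: "g1 \<in> borel_measurable Fm" "AE \<omega> in M. V1 \<omega> = g1 \<omega>"
            using WF unfolding V1_def by blast
          obtain g2 where g2: "g2 \<in> borel_measurable Fm" "AE \<omega> in M. V2 \<omega> = g2 \<omega>"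
            using WF unfolding V2_def by blast
          have "AE \<omega> in M. rho (V1 \<omega>) $ k * cnj (rho (V2 \<omega>) $ k') = rho (g1 \<omega>) $ k * cnj (rho (g2 \<omega>) $ k')"
            using g1(2) g2(2) by eventually_elim simp
          moreover have "(\<lambda>\<omega>. rho (g1 \<omega>) $ k * cnj (rho (g2 \<omega>) $ k')) \<in> borel_measurable Fm"
            using g1(1) g2(1) by measurable
          ultimately show "\<exists>g\<in>borel_measurable Fm. AE \<omega> in M. rho (V1 \<omega>) $ k * cnj (rho (V2 \<omega>) $ k') = g \<omega>"
            by (auto intro!: bexI[of _ "\<lambda>\<omega>. rho (g1 \<omega>) $ k * cnj (rho (g2 \<omega>) $ k')"])
          show "integrable M (\<lambda>\<omega>. rho (V1 \<omega>) $ k * cnj (rho (V2 \<omega>) $ k'))"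
          proof (rule Bochner_Integration.integrable_bound[where f="\<lambda>\<omega>. cmod (V1 \<omega>) ^ 2 + cmod (V2 \<omega>) ^ 2"])
            show "integrable M (\<lambda>\<omega>. cmod (V1 \<omega>) ^ 2 + cmod (V2 \<omega>) ^ 2)"
              unfolding V1_def V2_def using mom2p by simp
            show "(\<lambda>\<omega>. rho (V1 \<omega>) $ k * cnj (rho (V2 \<omega>) $ k')) \<in> borel_measurable M" by measurable
            have "cmod (V1 \<omega>) * cmod (V2 \<omega>) \<le> cmod (V1 \<omega>) ^ 2 + cmod (V2 \<omega>) ^ 2" for \<omega>
              by (smt (verit, best) norm_ge_zero power2_eq_square mult_mono sum_squares_bound)
            then show "AE \<omega> in M. norm (rho (V1 \<omega>) $ k * cnj (rho (V2 \<omega>) $ k')) \<le> norm (cmod (V1 \<omega>) ^ 2 + cmod (V2 \<omega>) ^ 2)"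
              by (auto simp: norm_mult rho_norm)
          qed
        qed
        also have "(LINT \<omega>|M. rho (V1 \<omega>) $ k * cnj (rho (V2 \<omega>) $ k')) =
            (LINT \<omega>|M. rho (WX X psi \<omega> t (j0 - int l)) $ k *
             cnj (rho (WX X psi \<omega> (t - 2 powr (real_of_int (j0 - int l)) * \<tau>) (j0 - int l - a)) $ k'))"
          using st_pair(1)[OF X_meas pm W_stat, where G="\<lambda>z1 z2. rho z1 $ k * cnj (rho z2 $ k')" and ta="s * t" and tb="s * t2"
              and h=hh and ja="j0 - int l" and jb="j0 - a - int l", OF Gm]
          unfolding V1_def V2_def e_t1 e_t2 e_j2 by simp
        finally show ?thesis .
      qed
      have sq: "sqrt (c * q1) * sqrt (c * q2) = c * (sqrt q1 * sqrt q2)"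
        using cpos q1nn q2nn by (simp add: real_sqrt_mult)
      have sigL2': "sigmaW M X psi t2 (j0 - a) = sqrt (c * q2)" using sigL2 unfolding t2_def .
      have entry: "(complex_of_real c * x) / complex_of_real (c * y) = x / complex_of_real y" for x y
        using cpos by simp
      show ?thesis
        unfolding C_rhoW_def t2_def[symmetric] sigL1 sigL2' sigR1 sigR2 sq num entry ..
    qed
  qed
  have part2: "\<forall>\<tau> t j a. j \<le> J \<and> j - a \<le> J \<and> 0 \<le> J \<and> - a \<le> J \<longrightarrow>
              C_rhoW M X psi t \<tau> j a = C_rhoW M X psi t \<tau> 0 a"
  proof (intro allI impI)
    fix \<tau> t j a assume H: "j \<le> J \<and> j - a \<le> J \<and> 0 \<le> J \<and> - a \<le> J"
    show "C_rhoW M X psi t \<tau> j a = C_rhoW M X psi t \<tau> 0 a"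
    proof (cases "0 \<le> j")
      case True
      have "C_rhoW M X psi t \<tau> j a = C_rhoW M X psi t \<tau> (j - int (nat j)) a"
        by (rule Lstep) (use H in auto)
      then show ?thesis using True by simp
    next
      case False
      have "C_rhoW M X psi t \<tau> 0 a = C_rhoW M X psi t \<tau> (0 - int (nat (- j))) a"
        by (rule Lstep) (use H in auto)
      then show ?thesis using False by simp
    qed
  qed
  show ?thesis using part1 part2 by blast
qed


end
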